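(* Let $0<p\le\infty$ and $E=\mathcal{L}^p(I)$. If each scale function $\alpha_n$, $n=1,\dots,N$, is non-null almost everywhere, then the linear operator $\mathcal{P}_0^1:E\to E$, $\mathcal{P}_0^1(b):=0*_Tb$, is injective.
   Context: Let $N\ge 2$, $I=[x_0,x_N]$, $\Delta: x_0<\dots<x_N$ a partition, $L_n(x)=a_nx+b_n$ affine with $L_n(x_0)=x_{n-1}$, $L_n(x_N)=x_n$, $I_1=[x_0,x_1]$, $I_n=(x_{n-1},x_n]$ for $n\ge2$, and $\alpha=(\alpha_1,\dots,\alpha_N)\in(\mathcal{L}^\infty(I))^N$ with $\Lambda:=\operatorname{ess\,sup}\{|\alpha_n(x)|:x\in I,n=1,\dots,N\}<1$. For $f,b\in E$, the fractal convolution $f*_Tb$ is the unique fixed point in $E$ of the contraction $Tg(x):=f(x)+\alpha_n(L_n^{-1}(x))(g-b)(L_n^{-1}(x))$, $x\in I_n$; $0$ denotes the null function. *)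

theory Defs
  imports "HOL-Analysis.Analysis"
begin

definition piece :: "(nat \<Rightarrow> real) \<Rightarrow> nat \<Rightarrow> real set" where
  "piece x n = (if n = 1 then {x 0 .. x 1} else {x (n - 1) <.. x n})"

text \<open>Membership in L^p(I) for 0 < p \<le> \<infinity> (w.r.t. Lebesgue measure on I);
  elements of L^p are identified up to a.e. equality (handled via AE in the statement).\<close>

definition in_Lp :: "ennreal \<Rightarrow> real set \<Rightarrow> (real \<Rightarrow> real) \<Rightarrow> bool" where
  "in_Lp p I f \<longleftrightarrow> f \<in> borel_measurable (lebesgue_on I) \<and>
     (if p = \<infinity> then (\<exists>C. AE t in lebesgue_on I. \<bar>f t\<bar> \<le> C)
      else (\<integral>\<^sup>+ t. ennreal (\<bar>f t\<bar> powr enn2real p) \<partial>(lebesgue_on I)) < \<infinity>)"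

text \<open>h is (a representative of) the fractal convolution f *_T b, i.e. the fixed point
  of T in L^p(I): h \<in> L^p(I) and h = T h almost everywhere on I, where on I_n
  (T g)(y) = f(y) + \<alpha>_n(L_n^{-1} y) (g - b)(L_n^{-1} y), L_n(t) = a_n t + c_n.\<close>

definition is_fractal_conv ::
  "ennreal \<Rightarrow> nat \<Rightarrow> (nat \<Rightarrow> real) \<Rightarrow> (nat \<Rightarrow> real) \<Rightarrow> (nat \<Rightarrow> real) \<Rightarrow>
   (nat \<Rightarrow> real \<Rightarrow> real) \<Rightarrow> (real \<Rightarrow> real) \<Rightarrow> (real \<Rightarrow> real) \<Rightarrow> (real \<Rightarrow> real) \<Rightarrow> bool" where
  "is_fractal_conv p N x a c \<alpha> f b h \<longleftrightarrow>
     in_Lp p {x 0 .. x N} h \<and>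
     (\<forall>n \<in> {1..N}. AE y in lebesgue. y \<in> piece x n \<longrightarrow>
        h y = f y + \<alpha> n ((y - c n) / a n) * (h ((y - c n) / a n) - b ((y - c n) / a n)))"

end

theory Submission
  imports Defs
begin

lemma AE_lebesgue_affine:
  fixes P :: "real \<Rightarrow> bool"
  assumes c: "c \<noteq> 0" and ae: "AE y in lebesgue. P y"
  shows "AE u in lebesgue. P (t + c * u)"
proof -
  from ae obtain Nn where Nn: "{y\<in>space lebesgue. \<not> P y} \<subseteq> Nn" "emeasure lebesgue Nn = 0" "Nn \<in> sets lebesgue"
    by (auto elim: AE_E)
  have meas: "(\<lambda>u. t + c * u) \<in> lebesgue \<rightarrow>\<^sub>M lebesgue"
    using lebesgue_affine_measurable[where c="\<lambda>_. c" and t=t] c by simp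
  have pre: "(\<lambda>u. t + c * u) -` Nn = (\<lambda>y. (1/c) *\<^sub>R y + (-t/c)) ` Nn"
  proof (intro set_eqI iffI)
    fix u assume "u \<in> (\<lambda>u. t + c * u) -` Nn"
    then show "u \<in> (\<lambda>y. (1/c) *\<^sub>R y + (-t/c)) ` Nn"
      by (intro image_eqI[where x="t + c*u"]) (use c in \<open>auto simp: field_simps\<close>)
  next
    fix u assume "u \<in> (\<lambda>y. (1/c) *\<^sub>R y + (-t/c)) ` Nn"
    then show "u \<in> (\<lambda>u. t + c * u) -` Nn" using c by (auto simp: field_simps)
  qed
  have "emeasure lebesgue ((\<lambda>u. t + c * u) -` Nn) = 0"
    unfolding pre by (subst emeasure_lebesgue_affine) (simp add: Nn)
  moreover have "(\<lambda>u. t + c * u) -` Nn \<in> sets lebesgue"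
    using measurable_sets[OF meas Nn(3)] by simp
  ultimately have "(\<lambda>u. t + c * u) -` Nn \<in> null_sets lebesgue" by auto
  then show ?thesis
    by (rule AE_I') (use Nn(1) in auto)
qed

theorem proposition6p1:
  fixes p :: ennreal and N :: nat and x a c :: "nat \<Rightarrow> real"
    and \<alpha> :: "nat \<Rightarrow> real \<Rightarrow> real"
  assumes p_pos: "0 < p"
    and N: "N \<ge> 2"
    and x_mono: "\<And>i j. i < j \<Longrightarrow> j \<le> N \<Longrightarrow> x i < x j"
    and L_left: "\<And>n. n \<in> {1..N} \<Longrightarrow> a n * x 0 + c n = x (n - 1)"
    and L_right: "\<And>n. n \<in> {1..N} \<Longrightarrow> a n * x N + c n = x n"
    and \<alpha>_meas: "\<And>n. n \<in> {1..N} \<Longrightarrow> \<alpha> n \<in> borel_measurable (lebesgue_on {x 0 .. x N})"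
    and \<Lambda>: "\<exists>\<Lambda> < 1. \<forall>n \<in> {1..N}. AE t in lebesgue_on {x 0 .. x N}. \<bar>\<alpha> n t\<bar> \<le> \<Lambda>"
    and \<alpha>_nonnull: "\<And>n. n \<in> {1..N} \<Longrightarrow> AE t in lebesgue_on {x 0 .. x N}. \<alpha> n t \<noteq> 0"
    and b1: "in_Lp p {x 0 .. x N} b1" and b2: "in_Lp p {x 0 .. x N} b2"
    and h1: "is_fractal_conv p N x a c \<alpha> (\<lambda>_. 0) b1 h1"
    and h2: "is_fractal_conv p N x a c \<alpha> (\<lambda>_. 0) b2 h2"
    and eq: "AE t in lebesgue_on {x 0 .. x N}. h1 t = h2 t"
  shows "AE t in lebesgue_on {x 0 .. x N}. b1 t = b2 t"
proof -
  define I where "I = {x 0 .. x N}"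
  have Isets: "I \<inter> space lebesgue \<in> sets lebesgue" by (simp add: I_def)
  have n1: "(1::nat) \<in> {1..N}" using N by simp
  have x01: "x 0 < x 1" using x_mono[of 0 1] N by simp
  have x1N: "x 1 \<le> x N" using x_mono[of 1 N] N by (cases "N = 1") auto
  have l1: "a 1 * x 0 + c 1 = x 0" using L_left[OF n1] by simp
  have r1: "a 1 * x N + c 1 = x 1" using L_right[OF n1] .
  have "a 1 * (x N - x 0) = x 1 - x 0" using l1 r1 by (simp add: algebra_simps)
  moreover have "x N - x 0 > 0" using x01 x1N by simp
  ultimately have apos: "a 1 > 0" using x01
    by (metis diff_gt_0_iff_gt zero_less_mult_pos2)
  hence anz: "a 1 \<noteq> 0" by simp
  have e1: "AE y in lebesgue. y \<in> piece x 1 \<longrightarrow>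
        h1 y = 0 + \<alpha> 1 ((y - c 1) / a 1) * (h1 ((y - c 1) / a 1) - b1 ((y - c 1) / a 1))"
    using h1 n1 unfolding is_fractal_conv_def by blast
  have e2: "AE y in lebesgue. y \<in> piece x 1 \<longrightarrow>
        h2 y = 0 + \<alpha> 1 ((y - c 1) / a 1) * (h2 ((y - c 1) / a 1) - b2 ((y - c 1) / a 1))"
    using h2 n1 unfolding is_fractal_conv_def by blast
  have e3: "AE y in lebesgue. y \<in> I \<longrightarrow> h1 y = h2 y"
    using eq unfolding I_def by (subst (asm) AE_restrict_space_iff) auto
  note t1 = AE_lebesgue_affine[OF anz e1, of "c 1"]
  note t2 = AE_lebesgue_affine[OF anz e2, of "c 1"]
  note t3 = AE_lebesgue_affine[OF anz e3, of "c 1"]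
  have t4: "AE u in lebesgue. u \<in> I \<longrightarrow> h1 u = h2 u" by (rule e3)
  have t5: "AE u in lebesgue. u \<in> I \<longrightarrow> \<alpha> 1 u \<noteq> 0"
    using \<alpha>_nonnull[OF n1] unfolding I_def by (subst (asm) AE_restrict_space_iff) auto
  have "AE u in lebesgue. u \<in> I \<longrightarrow> b1 u = b2 u"
    using t1 t2 t3 t4 t5
  proof eventually_elim
    case (elim u)
    show ?case
    proof
      assume uI: "u \<in> I"
      have "a 1 * x 0 \<le> a 1 * u" using uI apos unfolding I_def
        by (intro mult_left_mono) auto
      hence "c 1 + a 1 * u \<ge> x 0" using l1 by linarith
      moreover have "a 1 * u \<le> a 1 * x N" using uI apos unfolding I_def
        by (intro mult_left_mono) auto
      hence "c 1 + a 1 * u \<le> x 1" using r1 by linarith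
      ultimately have inp: "c 1 + a 1 * u \<in> piece x 1" "c 1 + a 1 * u \<in> I"
        using x1N unfolding piece_def I_def by auto
      have uu: "(c 1 + a 1 * u - c 1) / a 1 = u" using anz by simp
      from elim inp uI uu have "\<alpha> 1 u * (h1 u - b1 u) = \<alpha> 1 u * (h2 u - b2 u)" "h1 u = h2 u" "\<alpha> 1 u \<noteq> 0"
        by auto
      then show "b1 u = b2 u" by simp
    qed
  qed
  then show ?thesis
    unfolding I_def by (subst AE_restrict_space_iff) auto
qed

end
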